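(* Let $k \geq 3$ and $n \geq 2k - 4$ be integers, and let $H$ be an $n$-vertex $k$-graph with $\delta_{k-1}(H) > n/3$ and a vertex partition $\{A, B\}$ of $V(H)$ with $|A|, |B| > 0$. Suppose that $H$ contains no $(A,B)$-diamond. Then $H$ contains a proto-balancer.
   Context: $\delta_{k-1}(H)$ is the minimum over $(k-1)$-subsets of $V(H)$ of the number of edges containing it. For $x,y \in V(H)$, an $(x,y)$-diamond is a pair of edges $e,f$ with $|e\cap f| = k-1$, $x \in e \setminus f$, $y \in f \setminus e$; an $(A,B)$-diamond is an $(x,y)$-diamond with $x \in A$, $y \in B$. An $(A,B)$-proto-balancer in $H$ is given by a $(k-3)$-set $S \subseteq V(H)$ and three $3$-sets $X_1, X_2, X_3 \subseteq V(H)\setminus S$ such that: $S \cup X_i \in E(H)$ for all $i \in [3]$; $|X_1 \cap A| = |X_2 \cap A| = |X_1 \cap X_2| = |X_1 \cap X_2 \cap A| = 2$; $|X_3 \cap A| = 0$; and $|X_1 \cap X_3| = |X_2 \cap X_3| = 1$ (the proto-balancer is the subgraph with edges $S\cup X_1, S \cup X_2, S\cup X_3$). A $(B,A)$-proto-balancer is defined in the same way with the roles of $A$ and $B$ exchanged. A proto-balancer is an $(A,B)$-proto-balancer or a $(B,A)$-proto-balancer. *)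

theory Defs
  imports Complex_Main
begin

definition kgraph :: "nat \<Rightarrow> 'a set \<Rightarrow> 'a set set \<Rightarrow> bool" where
  "kgraph k V E \<longleftrightarrow> finite V \<and> (\<forall>e\<in>E. e \<subseteq> V \<and> card e = k)"

definition deg :: "'a set set \<Rightarrow> 'a set \<Rightarrow> nat" where
  "deg E S = card {e\<in>E. S \<subseteq> e}"

definition min_codeg :: "nat \<Rightarrow> 'a set \<Rightarrow> 'a set set \<Rightarrow> nat" where
  "min_codeg k V E = Min ((deg E) ` {S. S \<subseteq> V \<and> card S = k - 1})"

definition diamond :: "nat \<Rightarrow> 'a set set \<Rightarrow> 'a \<Rightarrow> 'a \<Rightarrow> 'a set \<Rightarrow> 'a set \<Rightarrow> bool" where
  "diamond k E x y e f \<longleftrightarrow> e \<in> E \<and> f \<in> E \<and> card (e \<inter> f) = k - 1 \<and>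
     x \<in> e - f \<and> y \<in> f - e"

definition has_AB_diamond :: "nat \<Rightarrow> 'a set set \<Rightarrow> 'a set \<Rightarrow> 'a set \<Rightarrow> bool" where
  "has_AB_diamond k E A B \<longleftrightarrow> (\<exists>x\<in>A. \<exists>y\<in>B. \<exists>e f. diamond k E x y e f)"

definition is_AB_proto_balancer ::
  "nat \<Rightarrow> 'a set \<Rightarrow> 'a set set \<Rightarrow> 'a set \<Rightarrow> 'a set \<Rightarrow> 'a set \<Rightarrow> 'a set \<Rightarrow> 'a set \<Rightarrow> bool" where
  "is_AB_proto_balancer k V E A S X1 X2 X3 \<longleftrightarrow>
     S \<subseteq> V \<and> card S = k - 3 \<and>
     (\<forall>X\<in>{X1, X2, X3}. X \<subseteq> V - S \<and> card X = 3 \<and> S \<union> X \<in> E) \<and>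
     card (X1 \<inter> A) = 2 \<and> card (X2 \<inter> A) = 2 \<and> card (X1 \<inter> X2) = 2 \<and>
     card (X1 \<inter> X2 \<inter> A) = 2 \<and> card (X3 \<inter> A) = 0 \<and>
     card (X1 \<inter> X3) = 1 \<and> card (X2 \<inter> X3) = 1"

definition has_proto_balancer :: "nat \<Rightarrow> 'a set \<Rightarrow> 'a set set \<Rightarrow> 'a set \<Rightarrow> 'a set \<Rightarrow> bool" where
  "has_proto_balancer k V E A B \<longleftrightarrow>
     (\<exists>S X1 X2 X3. is_AB_proto_balancer k V E A S X1 X2 X3 \<or>
                    is_AB_proto_balancer k V E B S X1 X2 X3)"

end

theory Submission
  imports Defs
begin

definition nb :: "'a set set \<Rightarrow> 'a set \<Rightarrow> 'a set" where
  "nb E T = {v. v \<notin> T \<and> insert v T \<in> E}"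

lemma nb_card:
  assumes kg: "kgraph k V E" and TV: "T \<subseteq> V" and cT: "card T = k - 1" and k1: "k \<ge> 1"
  shows "card (nb E T) = deg E T"
proof -
  have fT: "finite T" using kg TV unfolding kgraph_def by (meson finite_subset)
  have "bij_betw (\<lambda>v. insert v T) (nb E T) {e\<in>E. T \<subseteq> e}"
  proof (rule bij_betwI')
    fix x y assume "x \<in> nb E T" "y \<in> nb E T"
    then show "(insert x T = insert y T) = (x = y)" unfolding nb_def by blast
  next
    fix x assume "x \<in> nb E T" then show "insert x T \<in> {e\<in>E. T \<subseteq> e}" unfolding nb_def by auto
  next
    fix e assume "e \<in> {e\<in>E. T\<subseteq>e}"
    then have eE: "e\<in>E" and Te: "T\<subseteq>e" by auto
    then have ce: "card e = k" using kg unfolding kgraph_def by auto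
    have "card (e - T) = 1" using card_Diff_subset[OF fT Te] ce cT k1 Te
      by (metis One_nat_def Suc_pred' card_mono diff_diff_cancel diff_is_0_eq' le_zero_eq not_one_le_zero less_one
          card.infinite)
    then obtain v where v: "e - T = {v}" using card_1_singletonE by blast
    have ev: "e = insert v T" using v Te by blast
    then show "\<exists>v\<in>nb E T. e = insert v T" unfolding nb_def using v eE
      by (intro bexI[of _ v]) auto
  qed
  then show ?thesis unfolding deg_def by (simp add: bij_betw_same_card)
qed

lemma nb_big:
  assumes kg: "kgraph k V E" and TV: "T \<subseteq> V" and cT: "card T = k - 1" and k1: "k \<ge> 1"
    and md: "real (min_codeg k V E) > real n / 3"
  shows "real (card (nb E T)) > real n / 3" "nb E T \<subseteq> V" "finite (nb E T)"
proof -
  have fV: "finite V" using kg unfolding kgraph_def by auto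
  have fin: "finite {S. S \<subseteq> V \<and> card S = k - 1}"
    by (rule finite_subset[of _ "Pow V"]) (use fV in auto)
  have "min_codeg k V E \<le> deg E T" unfolding min_codeg_def
    by (rule Min_le) (use fin TV cT in auto)
  then show "real (card (nb E T)) > real n / 3" using nb_card[OF kg TV cT k1] md by simp
  show s: "nb E T \<subseteq> V" using kg unfolding kgraph_def nb_def by auto
  show "finite (nb E T)" using finite_subset[OF s fV] .
qed

lemma core:
  assumes k3: "k \<ge> 3" and kg: "kgraph k V E" and cV: "card V = n"
    and md: "real (min_codeg k V E) > real n / 3"
    and AB: "A \<union> B = V" "A \<inter> B = {}"
    and ndH: "\<forall>T u v. card T = k-1 \<and> u \<notin> T \<and> v \<notin> T \<and> insert u T \<in> E \<and> insert v T \<in> E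
               \<longrightarrow> \<not>(u \<in> A \<and> v \<in> B) \<and> \<not>(u \<in> B \<and> v \<in> A)"
    and eE: "e \<in> E" and ee: "a \<in> e" "a' \<in> e" "b1 \<in> e" "a \<noteq> a'" "a \<in> A" "a' \<in> A" "b1 \<in> B"
  shows "\<exists>S X1 X2 X3. is_AB_proto_balancer k V E A S X1 X2 X3"
proof -
  have nd: "\<And>T u v. card T = k-1 \<Longrightarrow> u \<notin> T \<Longrightarrow> v \<notin> T \<Longrightarrow> insert u T \<in> E
               \<Longrightarrow> insert v T \<in> E \<Longrightarrow> u \<in> A \<Longrightarrow> v \<in> B \<Longrightarrow> False" using ndH by blast
  have nd2: "\<And>T u v. card T = k-1 \<Longrightarrow> u \<notin> T \<Longrightarrow> v \<notin> T \<Longrightarrow> insert u T \<in> E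
               \<Longrightarrow> insert v T \<in> E \<Longrightarrow> u \<in> B \<Longrightarrow> v \<in> A \<Longrightarrow> False" using ndH by blast
  have fV: "finite V" using kg unfolding kgraph_def by auto
  have eV: "e \<subseteq> V" and ce: "card e = k" using kg eE unfolding kgraph_def by auto
  have fe: "finite e" using eV fV finite_subset by blast
  have "k \<le> n" using card_mono[OF fV eV] ce cV by simp
  then have n3: "n \<ge> 3" using k3 by simp
  have ab1: "a \<noteq> b1" "a' \<noteq> b1" using ee AB by auto
  define S where "S = e - {a,a',b1}"
  have fS: "finite S" using fe S_def by simp
  have k1: "k \<ge> 1" using k3 by simp
  have SV: "S \<subseteq> V" using eV S_def by auto
  have cS: "card S = k - 3" unfolding S_def
    using card_Diff_subset[OF _ , of "{a,a',b1}" e] ee ab1 ce by simp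
  have nS: "a \<notin> S" "a' \<notin> S" "b1 \<notin> S" unfolding S_def by auto
  have e_eq: "e = insert b1 (insert a (insert a' S))" unfolding S_def using ee by auto
  define T0 where "T0 = insert a (insert a' S)"
  have cT0: "card T0 = k - 1" unfolding T0_def using fS nS ee cS k3 by simp
  have T0V: "T0 \<subseteq> V" unfolding T0_def using SV eV ee by auto
  have b1N0: "b1 \<in> nb E T0" unfolding nb_def T0_def using e_eq eE nS ab1 by auto
  note N0 = nb_big[OF kg T0V cT0 k1 md]
  have "card (nb E T0) \<ge> 2"
  proof (rule ccontr)
    assume "\<not> 2 \<le> card (nb E T0)"
    then have "real (card (nb E T0)) \<le> 1" by simp
    moreover have "real n \<ge> 3" using n3 by simp
    ultimately show False using N0(1) by linarith
  qed
  then have "card (nb E T0 - {b1}) \<ge> 1" using b1N0 N0(3) by simp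
  then obtain b2 where b2: "b2 \<in> nb E T0" "b2 \<noteq> b1"
    by (metis Diff_iff card.empty ex_in_conv insertCI not_one_le_zero)
  have b2E: "insert b2 T0 \<in> E" and b2T0: "b2 \<notin> T0" using b2 unfolding nb_def by auto
  have b2B: "b2 \<in> B"
  proof (rule ccontr)
    assume "b2 \<notin> B"
    then have "b2 \<in> A" using b2 N0(2) AB by auto
    then show False using nd2[OF cT0, of b1 b2] b1N0 b2 ee unfolding nb_def by auto
  qed
  have b2S: "b2 \<notin> S" using b2T0 unfolding T0_def by auto
  define T1 where "T1 = insert b1 (insert b2 S)"
  have cT1: "card T1 = k - 1" unfolding T1_def using fS nS b2S b2 cS k3 by simp
  have T1V: "T1 \<subseteq> V" unfolding T1_def using SV eV ee b2 N0(2) by auto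
  note N1 = nb_big[OF kg T1V cT1 k1 md]
  have "nb E T1 \<noteq> {}" using N1(1) n3
    by (metis card.empty divide_nonneg_nonneg less_le_not_le of_nat_0 of_nat_0_le_iff zero_le_numeral)
  then obtain v where v: "v \<in> nb E T1" by blast
  have vE: "insert v T1 \<in> E" and vT1: "v \<notin> T1" using v unfolding nb_def by auto
  have vV: "v \<in> V" using v N1(2) by auto
  show ?thesis
  proof (cases "v \<in> B")
    case True
    have aB: "a \<notin> B" "a' \<notin> B" using ee AB by auto
    have bA: "b1 \<notin> A" "b2 \<notin> A" "v \<notin> A" using ee b2B True AB by auto
    have vne: "v \<noteq> b1" "v \<noteq> b2" "v \<notin> S" using vT1 unfolding T1_def by auto
    have ab2: "a \<noteq> b2" "a' \<noteq> b2" using ee b2B AB by auto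
    have av: "a \<noteq> v" "a' \<noteq> v" using ee True AB by auto
    have i1: "{a,a',b1} \<inter> A = {a,a'}" using ee bA by auto
    have i2: "{a,a',b2} \<inter> A = {a,a'}" using ee bA by auto
    have i3: "{a,a',b1} \<inter> {a,a',b2} = {a,a'}" using b2 ab1 ab2 by auto
    have i4: "{a,a',b1} \<inter> {a,a',b2} \<inter> A = {a,a'}" using i3 ee by auto
    have i8: "{a,a'} \<inter> A = {a,a'}" using ee by auto
    have i5: "{b1,b2,v} \<inter> A = {}" using bA by auto
    have i6: "{a,a',b1} \<inter> {b1,b2,v} = {b1}" using ab1 ab2 av by auto
    have i7: "{a,a',b2} \<inter> {b1,b2,v} = {b2}" using ab1 ab2 av by auto
    have E1: "S \<union> {a,a',b1} \<in> E"
    proof -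
      have "S \<union> {a,a',b1} = e" using e_eq by auto
      then show ?thesis using eE by simp
    qed
    have E2: "S \<union> {a,a',b2} \<in> E"
    proof -
      have "S \<union> {a,a',b2} = insert b2 T0" unfolding T0_def by auto
      then show ?thesis using b2E by simp
    qed
    have E3: "S \<union> {b1,b2,v} \<in> E"
    proof -
      have "S \<union> {b1,b2,v} = insert v T1" unfolding T1_def by auto
      then show ?thesis using vE by simp
    qed
    have c1: "card {a,a',b1} = 3" using ee ab1 by simp
    have c2: "card {a,a',b2} = 3" using ee ab2 by simp
    have c3: "card {b1,b2,v} = 3" using b2 vne by simp
    have s1: "{a,a',b1} \<subseteq> V - S" using nS eV ee by auto
    have s2: "{a,a',b2} \<subseteq> V - S" using nS b2S eV ee T0V unfolding T0_def
      using N0(2) b2(1) by auto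
    have s3: "{b1,b2,v} \<subseteq> V - S" using nS b2S vne T1V vV unfolding T1_def by auto
    have ca: "card {a,a'} = 2" using ee by simp
    have "is_AB_proto_balancer k V E A S {a,a',b1} {a,a',b2} {b1,b2,v}"
      unfolding is_AB_proto_balancer_def
    proof (intro conjI)
      show "\<forall>X\<in>{{a,a',b1}, {a,a',b2}, {b1,b2,v}}. X \<subseteq> V - S \<and> card X = 3 \<and> S \<union> X \<in> E"
        using c1 c2 c3 s1 s2 s3 E1 E2 E3 by blast
    qed (simp_all only: SV cS ca i1 i2 i3 i4 i8 i5 i6 i7 card.empty is_singletonI is_singleton_altdef[symmetric]
           card_1_singleton_iff)
    then show ?thesis by blast
  next
    case False
    then have vA: "v \<in> A" using vV AB by auto
    define TP where "TP = insert a (insert b1 S)"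
    define TR where "TR = insert b1 (insert v S)"
    have vne: "v \<noteq> b1" "v \<noteq> b2" "v \<notin> S" using vT1 unfolding T1_def by auto
    have cTP: "card TP = k - 1" unfolding TP_def using fS nS ab1 cS k3 by simp
    have cTR: "card TR = k - 1" unfolding TR_def using fS vne cS k3 nS by simp
    have TPV: "TP \<subseteq> V" unfolding TP_def using SV eV ee by auto
    have TRV: "TR \<subseteq> V" unfolding TR_def using SV eV ee vV by auto
    note NP = nb_big[OF kg TPV cTP k1 md]
    note NR = nb_big[OF kg TRV cTR k1 md]
    have a'P: "a' \<in> nb E TP" unfolding nb_def TP_def using e_eq eE nS ab1 ee
      by (auto simp: insert_commute)
    have PA: "nb E TP \<subseteq> A"
    proof
      fix y assume y: "y \<in> nb E TP"
      show "y \<in> A"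
      proof (rule ccontr)
        assume "y \<notin> A" then have "y \<in> B" using y NP(2) AB by auto
        then show False using nd[OF cTP, of a' y] a'P y ee unfolding nb_def by auto
      qed
    qed
    have QA: "nb E T1 \<subseteq> A"
    proof
      fix y assume y: "y \<in> nb E T1"
      show "y \<in> A"
      proof (rule ccontr)
        assume "y \<notin> A" then have "y \<in> B" using y N1(2) AB by auto
        then show False using nd[OF cT1, of v y] v y vA unfolding nb_def by auto
      qed
    qed
    have b2R: "b2 \<in> nb E TR" unfolding nb_def TR_def using vE vne b2S b2 unfolding T1_def
      by (auto simp: insert_commute)
    have RB: "nb E TR \<subseteq> B"
    proof
      fix y assume y: "y \<in> nb E TR"
      show "y \<in> B"
      proof (rule ccontr)
        assume "y \<notin> B" then have "y \<in> A" using y NR(2) AB by auto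
        then show False using nd2[OF cTR, of b2 y] b2R y b2B unfolding nb_def by auto
      qed
    qed
    have PQ: "nb E TP \<inter> nb E T1 = {}"
    proof (rule ccontr)
      assume "nb E TP \<inter> nb E T1 \<noteq> {}"
      then obtain y where yP: "y \<in> nb E TP" and yQ: "y \<in> nb E T1" by blast
      have yP': "y \<notin> TP" "insert y TP \<in> E" using yP unfolding nb_def by auto
      have yQ': "y \<notin> T1" "insert y T1 \<in> E" using yQ unfolding nb_def by auto
      define T where "T = insert b1 (insert y S)"
      have yb: "b1 \<noteq> y" "y \<notin> S" using yP' unfolding TP_def by auto
      have cT: "card T = k - 1" unfolding T_def using fS yb nS cS k3 by simp
      have aT: "a \<notin> T" unfolding T_def using ab1 yP' nS unfolding TP_def by auto
      have b2T: "b2 \<notin> T" unfolding T_def using b2 yQ' b2S unfolding T1_def by auto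
      have "insert a T \<in> E" using yP'(2) unfolding T_def TP_def by (simp add: insert_commute)
      moreover have "insert b2 T \<in> E" using yQ'(2) unfolding T_def T1_def by (simp add: insert_commute)
      ultimately show False using nd[OF cT aT b2T] ee b2B by auto
    qed
    have PR: "nb E TP \<inter> nb E TR = {}" using PA RB AB by auto
    have QR: "nb E T1 \<inter> nb E TR = {}" using QA RB AB by auto
    have "card (nb E TP \<union> nb E T1 \<union> nb E TR) = card (nb E TP) + card (nb E T1) + card (nb E TR)"
      using PQ PR QR NP(3) N1(3) NR(3) by (simp add: card_Un_disjoint Int_Un_distrib2)
    moreover have "card (nb E TP \<union> nb E T1 \<union> nb E TR) \<le> n"
      using card_mono[OF fV] NP(2) N1(2) NR(2) cV by (metis Un_least)
    ultimately show ?thesis using NP(1) N1(1) NR(1) by linarith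
  qed
qed

theorem lemma7p4:
  fixes k n :: nat and V A B :: "'a set" and E :: "'a set set"
  assumes "k \<ge> 3" and "n \<ge> 2 * k - 4"
    and "kgraph k V E" and "card V = n"
    and "real (min_codeg k V E) > real n / 3"
    and "A \<union> B = V" and "A \<inter> B = {}" and "card A > 0" and "card B > 0"
    and "\<not> has_AB_diamond k E A B"
  shows "has_proto_balancer k V E A B"
proof -
  note k3 = assms(1) and kg = assms(3) and cV = assms(4) and md = assms(5)
  have fV: "finite V" using kg unfolding kgraph_def by auto
  have nd: "\<And>T u v. card T = k-1 \<Longrightarrow> u \<notin> T \<Longrightarrow> v \<notin> T \<Longrightarrow> insert u T \<in> E
               \<Longrightarrow> insert v T \<in> E \<Longrightarrow> u \<in> A \<Longrightarrow> v \<in> B \<Longrightarrow> False"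
  proof -
    fix T u v assume that: "card T = k-1" "u \<notin> T" "v \<notin> T" "insert u T \<in> E"
               "insert v T \<in> E" "u \<in> A" "v \<in> B"
    have "u \<noteq> v" using that assms(7) by auto
    then have "insert u T \<inter> insert v T = T" using that by auto
    then have "diamond k E u v (insert u T) (insert v T)" unfolding diamond_def using that \<open>u\<noteq>v\<close> by auto
    then show False using assms(10) that unfolding has_AB_diamond_def by blast
  qed
  have nd2: "\<And>T u v. card T = k-1 \<Longrightarrow> u \<notin> T \<Longrightarrow> v \<notin> T \<Longrightarrow> insert u T \<in> E
               \<Longrightarrow> insert v T \<in> E \<Longrightarrow> u \<in> B \<Longrightarrow> v \<in> A \<Longrightarrow> False"
    using nd by blast
  have ndA: "\<forall>T u v. card T = k-1 \<and> u \<notin> T \<and> v \<notin> T \<and> insert u T \<in> E \<and> insert v T \<in> E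
               \<longrightarrow> \<not>(u \<in> A \<and> v \<in> B) \<and> \<not>(u \<in> B \<and> v \<in> A)" using nd nd2 by blast
  have ndB: "\<forall>T u v. card T = k-1 \<and> u \<notin> T \<and> v \<notin> T \<and> insert u T \<in> E \<and> insert v T \<in> E
               \<longrightarrow> \<not>(u \<in> B \<and> v \<in> A) \<and> \<not>(u \<in> A \<and> v \<in> B)" using nd nd2 by blast
  obtain a where a: "a \<in> A" using assms(8) by (metis card.empty ex_in_conv less_irrefl)
  obtain b where b: "b \<in> B" using assms(9) by (metis card.empty ex_in_conv less_irrefl)
  have ab: "a \<noteq> b" using a b assms(7) by auto
  have abV: "a \<in> V" "b \<in> V" using a b assms(6) by auto
  have "card (V - {a,b}) = n - 2" using abV ab cV fV by simp
  moreover have "n - 2 \<ge> k - 3" using assms(1,2) by simp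
  ultimately obtain R where R: "R \<subseteq> V - {a,b}" "card R = k - 3"
    by (metis obtain_subset_with_card_n)
  have fR: "finite R" using R fV finite_subset by blast
  define T where "T = insert a (insert b R)"
  have k1: "k \<ge> 1" using k3 by simp
  have abR: "a \<notin> R" "b \<notin> R" using R by auto
  have cT: "card T = k - 1" unfolding T_def using R fR ab k3 abR by simp
  have TV: "T \<subseteq> V" unfolding T_def using R abV by auto
  note N = nb_big[OF kg TV cT k1 md]
  have "nb E T \<noteq> {}" using N(1)
    by (metis card.empty divide_nonneg_nonneg less_le_not_le of_nat_0 of_nat_0_le_iff zero_le_numeral)
  then obtain v where v: "v \<in> nb E T" by blast
  have vE: "insert v T \<in> E" and vT: "v \<notin> T" using v unfolding nb_def by auto
  have vV: "v \<in> V" using v N(2) by auto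
  show ?thesis
  proof (cases "v \<in> A")
    case True
    have ins: "a \<in> insert v T" "v \<in> insert v T" "b \<in> insert v T" "a \<noteq> v"
      using vT T_def by auto
    have "\<exists>S X1 X2 X3. is_AB_proto_balancer k V E A S X1 X2 X3"
      using core[OF k3 kg cV md assms(6,7) ndA vE ins a True b] by blast
    then show ?thesis unfolding has_proto_balancer_def by blast
  next
    case False
    then have vB: "v \<in> B" using vV assms(6) by auto
    have BA: "B \<union> A = V" "B \<inter> A = {}" using assms(6,7) by auto
    have ins: "b \<in> insert v T" "v \<in> insert v T" "a \<in> insert v T" "b \<noteq> v"
      using vT T_def by auto
    have "\<exists>S X1 X2 X3. is_AB_proto_balancer k V E B S X1 X2 X3"
      using core[OF k3 kg cV md BA ndB vE ins b vB a] by blast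
    then show ?thesis unfolding has_proto_balancer_def by blast
  qed
qed

end
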